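(* Let $G$ be a $2$-connected graph and $K$ a connected subgraph of $G$ with at least three vertices. Then $G_K$ is $2$-connected.
   Context: Graphs are simple. For a connected graph $G$ and a subgraph $K$, $G_K$ denotes the minor of $G$ obtained by contracting, for each component of $G-K$ (the graph obtained by deleting the vertices of $K$), all edges of that component to a single vertex, and then deleting all multiple edges. *)

theory Defs
  imports Main
begin

definition graph :: "'a set \<Rightarrow> ('a \<Rightarrow> 'a \<Rightarrow> bool) \<Rightarrow> bool" where
  "graph V E \<longleftrightarrow> finite V \<and> (\<forall>x y. E x y \<longrightarrow> x \<in> V \<and> y \<in> V)
     \<and> (\<forall>x y. E x y \<longrightarrow> E y x) \<and> (\<forall>x. \<not> E x x)"

definition subgraph :: "'a set \<Rightarrow> ('a \<Rightarrow> 'a \<Rightarrow> bool) \<Rightarrow> 'a set \<Rightarrow> ('a \<Rightarrow> 'a \<Rightarrow> bool) \<Rightarrow> bool" where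
  "subgraph VK EK V E \<longleftrightarrow> graph VK EK \<and> VK \<subseteq> V \<and> (\<forall>x y. EK x y \<longrightarrow> E x y)"

definition reach :: "'a set \<Rightarrow> ('a \<Rightarrow> 'a \<Rightarrow> bool) \<Rightarrow> 'a \<Rightarrow> 'a \<Rightarrow> bool" where
  "reach W E = (\<lambda>x y. x \<in> W \<and> y \<in> W \<and> E x y)\<^sup>*\<^sup>*"

definition connected :: "'a set \<Rightarrow> ('a \<Rightarrow> 'a \<Rightarrow> bool) \<Rightarrow> bool" where
  "connected W E \<longleftrightarrow> W \<noteq> {} \<and> (\<forall>x\<in>W. \<forall>y\<in>W. reach W E x y)"

definition two_connected :: "'a set \<Rightarrow> ('a \<Rightarrow> 'a \<Rightarrow> bool) \<Rightarrow> bool" where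
  "two_connected V E \<longleftrightarrow> card V \<ge> 3 \<and> connected V E \<and> (\<forall>v\<in>V. connected (V - {v}) E)"

definition components :: "'a set \<Rightarrow> ('a \<Rightarrow> 'a \<Rightarrow> bool) \<Rightarrow> 'a set set" where
  "components W E = (\<lambda>x. {y. reach W E x y}) ` W"

text \<open>The minor G_K: vertices are the singletons {v} for v in K and the (vertex sets of the)
  components of G - K, each contracted to a single vertex; two such vertices are adjacent iff
  they are distinct and G has an edge between them (multiple edges and loops removed).\<close>
definition GK_verts :: "'a set \<Rightarrow> ('a \<Rightarrow> 'a \<Rightarrow> bool) \<Rightarrow> 'a set \<Rightarrow> 'a set set" where
  "GK_verts V E VK = (\<lambda>v. {v}) ` VK \<union> components (V - VK) E"

definition GK_edges :: "'a set \<Rightarrow> ('a \<Rightarrow> 'a \<Rightarrow> bool) \<Rightarrow> 'a set \<Rightarrow> 'a set \<Rightarrow> 'a set \<Rightarrow> bool" where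
  "GK_edges V E VK X Y \<longleftrightarrow> X \<in> GK_verts V E VK \<and> Y \<in> GK_verts V E VK \<and> X \<noteq> Y
     \<and> (\<exists>x\<in>X. \<exists>y\<in>Y. E x y)"

end

theory Submission
  imports Defs
begin

lemma reach_refl: "reach U E x x"
  unfolding reach_def by simp

lemma reach_trans: "reach U E x y \<Longrightarrow> reach U E y z \<Longrightarrow> reach U E x z"
  unfolding reach_def by (rule rtranclp_trans)

lemma reach_sym:
  assumes "\<forall>x y. E x y \<longrightarrow> E y x" "reach U E x y"
  shows "reach U E y x"
  using assms(2) unfolding reach_def
proof (induction rule: rtranclp_induct)
  case base then show ?case by simp
next
  case (step y z)
  then have "(\<lambda>x y. x \<in> U \<and> y \<in> U \<and> E x y) z y" using assms(1) by blast
  then show ?case using step(3) by (rule converse_rtranclp_into_rtranclp)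
qed

lemma reach_in: "reach U E x y \<Longrightarrow> x \<in> U \<Longrightarrow> y \<in> U"
  unfolding reach_def by (induction rule: rtranclp_induct) auto

lemma reach_mono: "reach U E' x y \<Longrightarrow> (\<forall>a b. E' a b \<longrightarrow> E a b) \<Longrightarrow> reach U E x y"
  unfolding reach_def by (induction rule: rtranclp_induct) (auto intro: rtranclp.rtrancl_into_rtrancl)

lemma lift:
  assumes "reach U E x y"
    and "\<And>a b. a \<in> U \<Longrightarrow> b \<in> U \<Longrightarrow> E a b \<Longrightarrow> c a \<noteq> c b \<Longrightarrow> F (c a) (c b)"
    and "\<And>u. u \<in> U \<Longrightarrow> c u \<in> A"
  shows "reach A F (c x) (c y)"
  using assms(1) unfolding reach_def
proof (induction rule: rtranclp_induct)
  case base then show ?case by simp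
next
  case (step y z)
  show ?case
  proof (cases "c y = c z")
    case True then show ?thesis using step by simp
  next
    case False
    then have "(\<lambda>x y. x \<in> A \<and> y \<in> A \<and> F x y) (c y) (c z)"
      using step assms(2,3) by blast
    with step(3) show ?thesis by (rule rtranclp.rtrancl_into_rtrancl)
  qed
qed

lemma hub:
  assumes "\<forall>x y. F x y \<longrightarrow> F y x" "A \<noteq> {}" "\<forall>Y\<in>A. reach A F Y h"
  shows "connected A F"
  unfolding connected_def using assms reach_sym reach_trans by metis

lemma edge_out:
  assumes symE: "\<forall>x y. E x y \<longrightarrow> E y x"
    and "reach V E d y" "d \<in> V - VK"
  shows "y \<in> {z. reach (V - VK) E d z} \<or> (\<exists>x\<in>{z. reach (V - VK) E d z}. \<exists>u\<in>VK. E x u)"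
proof -
  have "(\<lambda>x y. x \<in> V \<and> y \<in> V \<and> E x y)\<^sup>*\<^sup>* d y" using assms(2) by (simp add: reach_def)
  then show ?thesis
proof (induction rule: rtranclp_induct)
  case base then show ?case using reach_refl by fastforce
next
  case (step y z)
  show ?case
  proof (cases "y \<in> {z. reach (V - VK) E d z}")
    case True
    show ?thesis
    proof (cases "z \<in> VK")
      case True
      then show ?thesis using \<open>y \<in> _\<close> step(2) by blast
    next
      case False
      have "y \<in> V - VK" using True reach_in assms(3) by fastforce
      then have "reach (V - VK) E y z" using False step(2) unfolding reach_def by auto
      then show ?thesis using True reach_trans by fastforce
    qed
  next
    case False then show ?thesis using step(3) by blast
  qed
qed
qed

theorem lemma4p3:
  fixes V VK :: "'a set" and E EK :: "'a \<Rightarrow> 'a \<Rightarrow> bool"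
  assumes "graph V E"
    and "two_connected V E"
    and "subgraph VK EK V E"
    and "connected VK EK"
    and "card VK \<ge> 3"
  shows "two_connected (GK_verts V E VK) (GK_edges V E VK)"
proof -
  define W where "W = GK_verts V E VK"
  define F where "F = GK_edges V E VK"
  define cls where "cls u = (if u \<in> VK then {u} else {y. reach (V - VK) E u y})" for u
  have finV: "finite V" and inV: "\<And>x y. E x y \<Longrightarrow> x \<in> V \<and> y \<in> V"
    and symE: "\<forall>x y. E x y \<longrightarrow> E y x" using assms(1) unfolding graph_def by auto
  have KV: "VK \<subseteq> V" and EKE: "\<forall>a b. EK a b \<longrightarrow> E a b"
    using assms(3) unfolding subgraph_def by blast+
  have Vconn: "\<And>x y. x \<in> V \<Longrightarrow> y \<in> V \<Longrightarrow> reach V E x y"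
    and Vvconn: "\<And>v x y. v \<in> V \<Longrightarrow> x \<in> V - {v} \<Longrightarrow> y \<in> V - {v} \<Longrightarrow> reach (V - {v}) E x y"
  proof -
    show "\<And>x y. x \<in> V \<Longrightarrow> y \<in> V \<Longrightarrow> reach V E x y"
      using assms(2) unfolding two_connected_def connected_def by blast
    fix v x y assume "v \<in> V" "x \<in> V - {v}" "y \<in> V - {v}"
    moreover have "connected (V - {v}) E" using assms(2) \<open>v \<in> V\<close> unfolding two_connected_def by blast
    ultimately show "reach (V - {v}) E x y" unfolding connected_def by blast
  qed
  have Kconn: "\<And>x y. x \<in> VK \<Longrightarrow> y \<in> VK \<Longrightarrow> reach VK E x y"
    using assms(4) EKE reach_mono unfolding connected_def by metis
  have finK: "finite VK" using finV KV finite_subset by blast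
  have comp: "\<exists>x\<in>V - VK. X = cls x \<and> X \<noteq> {} \<and> X \<subseteq> V - VK"
    if XC0: "X \<in> components (V - VK) E" for X
  proof -
    obtain x where x: "x \<in> V - VK" "X = {y. reach (V - VK) E x y}"
      using XC0 unfolding components_def by blast
    have "X \<subseteq> V - VK" using x reach_in by fastforce
    moreover have "x \<in> X" using x reach_refl by fastforce
    ultimately show ?thesis using x unfolding cls_def by auto
  qed
  have Wcases: "(\<exists>u\<in>VK. X = {u}) \<or> (X \<in> components (V - VK) E)" if "X \<in> W" for X
    using that unfolding W_def GK_verts_def by auto
  have clsW: "cls u \<in> W" if "u \<in> V" for u
  proof (cases "u \<in> VK")
    case True then show ?thesis unfolding cls_def W_def GK_verts_def by auto
  next
    case False
    then show ?thesis using that unfolding cls_def W_def GK_verts_def components_def by auto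
  qed
  have self: "u \<in> cls u" for u unfolding cls_def using reach_refl by auto
  have clsK: "cls u = {u}" if "u \<in> VK" for u using that unfolding cls_def by auto
  have clsnK: "cls u \<subseteq> V - VK" if "u \<in> V - VK" for u
    using that reach_in unfolding cls_def by fastforce
  have Fedge: "F (cls a) (cls b)" if "a \<in> V" "b \<in> V" "E a b" "cls a \<noteq> cls b" for a b
    unfolding F_def GK_edges_def using that clsW self W_def by blast
  have symF: "\<forall>x y. F x y \<longrightarrow> F y x" unfolding F_def GK_edges_def using symE by blast
  have Wrep: "\<exists>x\<in>V. X = cls x" if "X \<in> W" for X
    using Wcases[OF that] comp clsK KV by blast
  have finW: "finite W"
  proof -
    have "W \<subseteq> Pow V" using Wcases comp KV by blast
    then show ?thesis using finV finite_subset by blast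
  qed
  have card3: "card W \<ge> 3"
  proof -
    have e: "card ((\<lambda>v. {v}) ` VK) = card VK" by (simp add: card_image)
    have "(\<lambda>v. {v}) ` VK \<subseteq> W" unfolding W_def GK_verts_def by (rule Un_upper1)
    then have "card ((\<lambda>v. {v}) ` VK) \<le> card W" by (rule card_mono[OF finW])
    then show ?thesis using e assms(5) by linarith
  qed
  have Wne: "W \<noteq> {}" using card3 by (intro notI) simp
  have conn: "connected W F"
    unfolding connected_def
  proof (intro conjI ballI Wne)
    fix X Y assume "X \<in> W" "Y \<in> W"
    obtain x where "x \<in> V" "X = cls x" using Wrep[OF \<open>X \<in> W\<close>] by blast
    obtain y where "y \<in> V" "Y = cls y" using Wrep[OF \<open>Y \<in> W\<close>] by blast
    have "reach W F (cls x) (cls y)"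
      by (rule lift[OF Vconn[OF \<open>x \<in> V\<close> \<open>y \<in> V\<close>]]) (rule Fedge clsW; assumption)+
    then show "reach W F X Y" using \<open>X = cls x\<close> \<open>Y = cls y\<close> by simp
  qed
  have del: "connected (W - {X}) F" if XW: "X \<in> W" for X
  proof (cases "\<exists>v\<in>VK. X = {v}")
    case True
    then obtain v where v: "v \<in> VK" "X = {v}" by blast
    have clsA: "cls u \<in> W - {X}" if "u \<in> V - {v}" for u
    proof (cases "u \<in> VK")
      case True then show ?thesis using that v clsW[of u] clsK[OF True] by auto
    next
      case False
      have "cls u \<subseteq> V - VK" using clsnK[of u] that False by blast
      then have "u \<in> cls u" "v \<notin> cls u" using self v by auto
      then show ?thesis using that v clsW by auto
    qed
    have rep: "\<exists>x\<in>V - {v}. Y = cls x" if YA: "Y \<in> W - {X}" for Y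
    proof -
      obtain x where x: "x \<in> V" "Y = cls x" using Wrep YA by blast
      have "x \<noteq> v" using YA x v clsK by auto
      then show ?thesis using x by blast
    qed
    have ne: "W - {X} \<noteq> {}"
    proof -
      have "card (W - {X}) \<ge> 2" using card3 XW finW by (simp add: card_Diff_singleton)
      then show ?thesis by (intro notI) simp
    qed
    show ?thesis unfolding connected_def
    proof (intro conjI ballI ne)
      fix Y Z assume "Y \<in> W - {X}" "Z \<in> W - {X}"
      obtain y where "y \<in> V - {v}" "Y = cls y" using rep[OF \<open>Y \<in> W - {X}\<close>] by blast
      obtain z where "z \<in> V - {v}" "Z = cls z" using rep[OF \<open>Z \<in> W - {X}\<close>] by blast
      have "reach (V - {v}) E y z" using Vvconn[of v y z] v KV \<open>y \<in> V - {v}\<close> \<open>z \<in> V - {v}\<close> by blast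
      have "reach (W - {X}) F (cls y) (cls z)"
        by (rule lift[OF \<open>reach (V - {v}) E y z\<close>]) (rule Fedge; simp; fail | rule clsA; assumption)+
      then show "reach (W - {X}) F Y Z" using \<open>Y = cls y\<close> \<open>Z = cls z\<close> by simp
    qed
  next
    case False
    then have XC: "X \<in> components (V - VK) E" using Wcases XW by blast
    obtain c where c: "c \<in> V - VK" "X = cls c" "X \<subseteq> V - VK" using comp[OF XC] by blast
    obtain k0 where k0: "k0 \<in> VK" using assms(5) by fastforce
    have singA: "cls u \<in> W - {X}" if "u \<in> VK" for u
    proof -
      have "cls u \<in> W" using clsW KV that by blast
      moreover have "cls u \<noteq> X" using clsK[OF that] c(3) that by auto
      ultimately show ?thesis by blast
    qed
    have toK: "reach (W - {X}) F {u} {k0}" if uK: "u \<in> VK" for u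
    proof -
      have "reach (W - {X}) F (cls u) (cls k0)"
      proof (rule lift[OF Kconn[OF uK k0]])
        fix a b assume ab: "a \<in> VK" "b \<in> VK" "E a b" "cls a \<noteq> cls b"
        have "a \<in> V" "b \<in> V" using ab(1,2) KV by (blast, blast)
        then show "F (cls a) (cls b)" using ab(3,4) by (rule Fedge)
      next
        fix w assume "w \<in> VK" then show "cls w \<in> W - {X}" by (rule singA)
      qed
      then show ?thesis using clsK[OF uK] clsK[OF k0] by simp
    qed
    have all: "\<forall>Y\<in>W - {X}. reach (W - {X}) F Y {k0}"
    proof
      fix Y assume Y: "Y \<in> W - {X}"
      show "reach (W - {X}) F Y {k0}"
      proof (cases "\<exists>u\<in>VK. Y = {u}")
        case True
        then obtain u where "u \<in> VK" "Y = {u}" by blast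
        then show ?thesis using toK by simp
      next
        case False
        then have YC: "Y \<in> components (V - VK) E" using Wcases Y by blast
        obtain d where d: "d \<in> V - VK" "Y = cls d" "Y \<subseteq> V - VK" using comp[OF YC] by blast
        have Yd: "Y = {z. reach (V - VK) E d z}" using d(1,2) unfolding cls_def by simp
        have dV: "d \<in> V" using d(1) by simp
        have k0V: "k0 \<in> V" using k0 KV by blast
        have "reach V E d k0" by (rule Vconn[OF dV k0V])
        from edge_out[OF symE this d(1)]
        have "k0 \<in> Y \<or> (\<exists>x\<in>Y. \<exists>u\<in>VK. E x u)" by (simp only: Yd[symmetric])
        moreover have "k0 \<notin> Y" using d(3) k0 by blast
        ultimately obtain x u where xu: "x \<in> Y" "u \<in> VK" "E x u" by blast
        have uA: "{u} \<in> W - {X}" using singA[OF xu(2)] clsK[OF xu(2)] by simp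
        have YW: "Y \<in> W" using Y by simp
        have "u \<notin> Y" using d(3) xu(2) by blast
        then have "Y \<noteq> {u}" by blast
        then have FY: "F Y {u}" unfolding F_def GK_edges_def
          using YW uA xu(1,3) W_def by blast
        have "reach (W - {X}) F Y {u}" unfolding reach_def
          by (rule r_into_rtranclp) (use Y uA FY in blast)
        then show ?thesis using toK[OF xu(2)] by (rule reach_trans)
      qed
    qed
    have "W - {X} \<noteq> {}" using singA[OF k0] by blast
    then show ?thesis by (rule hub[OF symF _ all])
  qed
  show ?thesis using card3 conn del unfolding two_connected_def W_def F_def by blast
qed

end
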